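(* Let $R$ be a commutative ring, $n\ge2$, and $\varepsilon\in{\rm E}_{2n}(R)$. Then there exists $\rho\in{\rm E}_{\psi_n}(R)$ such that $(1\perp\rho)\,\varepsilon\in{\rm ESp}_{2n}(R)$.
   Context: All rings are commutative with identity. ${\rm E}_m(R)$ is the subgroup of ${\rm SL}_m(R)$ generated by $E_{ij}(\lambda)=I_m+\lambda e_{ij}$ ($i\neq j$). $\psi_n=\sum_{i=1}^n e_{2i-1,2i}-\sum_{i=1}^n e_{2i,2i-1}$. $1\perp\rho$ denotes $\begin{pmatrix}1&0\\0&\rho\end{pmatrix}$. Let $\sigma$ be the permutation with $\sigma(2i)=2i-1$, $\sigma(2i-1)=2i$. For $z\in R$, $1\le i\ne j\le 2n$, set $se_{ij}(z)=I_{2n}+ze_{ij}$ if $i=\sigma(j)$, and $se_{ij}(z)=I_{2n}+ze_{ij}-(-1)^{i+j}ze_{\sigma(j)\sigma(i)}$ if $i\ne\sigma(j)$. ${\rm ESp}_{2n}(R)$ is the subgroup of ${\rm GL}_{2n}(R)$ generated by all $se_{ij}(z)$ (it is contained in $\{\alpha:\alpha^t\psi_n\alpha=\psi_n\}$). Elements of $R^m$ are row vectors, ${}^t$ is transpose. For an invertible alternating (of the form $\nu-\nu^t$) $2n\times2n$ matrix $\varphi$ write $\varphi=\begin{pmatrix}0&-c\\ c^t&\nu\end{pmatrix}$, $\varphi^{-1}=\begin{pmatrix}0&d\\ -d^t&\mu\end{pmatrix}$ with $c,d\in R^{2n-1}$, and set $\alpha_\varphi(v)=I_{2n-1}+d^tv\nu$,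 $\beta_\varphi(v)=I_{2n-1}+\mu v^tc$; ${\rm E}_\varphi(R)$ is the subgroup of ${\rm GL}_{2n-1}(R)$ generated by all $\alpha_\varphi(v),\beta_\varphi(v)$, $v\in R^{2n-1}$. *)

theory Defs
  imports "Jordan_Normal_Form.Matrix"
begin

text \<open>All index
  arguments below (i, j, sigma) use the paper's 1-based indices; entry (i,j) of the
  paper is entry (i-1,j-1) of the JNF matrix.\<close>

inductive_set gen_subgroup :: "nat \<Rightarrow> 'a::comm_ring_1 mat set \<Rightarrow> 'a mat set"
  for m :: nat and G :: "'a mat set" where
  gen_one: "1\<^sub>m m \<in> gen_subgroup m G"
| gen_gen: "g \<in> G \<Longrightarrow> g \<in> gen_subgroup m G"
| gen_mult: "A \<in> gen_subgroup m G \<Longrightarrow> B \<in> gen_subgroup m G \<Longrightarrow> A * B \<in> gen_subgroup m G"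
| gen_inv: "A \<in> gen_subgroup m G \<Longrightarrow> B \<in> carrier_mat m m \<Longrightarrow> A * B = 1\<^sub>m m
            \<Longrightarrow> B * A = 1\<^sub>m m \<Longrightarrow> B \<in> gen_subgroup m G"

definition unit_mat :: "nat \<Rightarrow> nat \<Rightarrow> nat \<Rightarrow> 'a::comm_ring_1 mat" where
  "unit_mat m i j = mat m m (\<lambda>(r, c). if r + 1 = i \<and> c + 1 = j then 1 else 0)"

definition elem_mat :: "nat \<Rightarrow> nat \<Rightarrow> nat \<Rightarrow> 'a::comm_ring_1 \<Rightarrow> 'a mat" where
  "elem_mat m i j l = 1\<^sub>m m + l \<cdot>\<^sub>m unit_mat m i j"

definition E_grp :: "nat \<Rightarrow> 'a::comm_ring_1 mat set" where
  "E_grp m = gen_subgroup m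
     {elem_mat m i j l | i j l. 1 \<le> i \<and> i \<le> m \<and> 1 \<le> j \<and> j \<le> m \<and> i \<noteq> j}"

definition psi :: "nat \<Rightarrow> 'a::comm_ring_1 mat" where
  "psi n = mat (2*n) (2*n) (\<lambda>(r, c).
      if odd (r + 1) \<and> c + 1 = r + 2 then 1
      else if even (r + 1) \<and> c + 2 = r + 1 then -1 else 0)"
  \<comment> \<open>paper indices: entry (2i-1,2i) = 1, entry (2i,2i-1) = -1, all else 0\<close>

definition sigma :: "nat \<Rightarrow> nat" where
  "sigma k = (if even k then k - 1 else k + 1)"

definition se :: "nat \<Rightarrow> nat \<Rightarrow> nat \<Rightarrow> 'a::comm_ring_1 \<Rightarrow> 'a mat" where
  "se n i j z = (if i = sigma j then 1\<^sub>m (2*n) + z \<cdot>\<^sub>m unit_mat (2*n) i j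
     else 1\<^sub>m (2*n) + z \<cdot>\<^sub>m unit_mat (2*n) i j
          - ((-1) ^ (i + j) * z) \<cdot>\<^sub>m unit_mat (2*n) (sigma j) (sigma i))"

definition ESp :: "nat \<Rightarrow> 'a::comm_ring_1 mat set" where
  "ESp n = gen_subgroup (2*n)
     {se n i j z | i j z. 1 \<le> i \<and> i \<le> 2*n \<and> 1 \<le> j \<and> j \<le> 2*n \<and> i \<noteq> j}"

definition mat_inv :: "'a::comm_ring_1 mat \<Rightarrow> 'a mat" where
  "mat_inv A = (THE B. B \<in> carrier_mat (dim_row A) (dim_row A)
                 \<and> A * B = 1\<^sub>m (dim_row A) \<and> B * A = 1\<^sub>m (dim_row A))"

text \<open>Block data of an invertible alternating matrix phi (size m = 2n):
  phi = [[0, -c], [c^t, nu]],  phi^{-1} = [[0, d], [-d^t, mu]].\<close>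
definition blk_c :: "'a::comm_ring_1 mat \<Rightarrow> 'a mat" where
  "blk_c phi = mat 1 (dim_row phi - 1) (\<lambda>(_, k). - (phi $$ (0, k + 1)))"
definition blk_nu :: "'a::comm_ring_1 mat \<Rightarrow> 'a mat" where
  "blk_nu phi = mat (dim_row phi - 1) (dim_row phi - 1) (\<lambda>(r, k). phi $$ (r + 1, k + 1))"
definition blk_d :: "'a::comm_ring_1 mat \<Rightarrow> 'a mat" where
  "blk_d phi = mat 1 (dim_row phi - 1) (\<lambda>(_, k). mat_inv phi $$ (0, k + 1))"
definition blk_mu :: "'a::comm_ring_1 mat \<Rightarrow> 'a mat" where
  "blk_mu phi = mat (dim_row phi - 1) (dim_row phi - 1) (\<lambda>(r, k). mat_inv phi $$ (r + 1, k + 1))"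

definition row_of :: "'a vec \<Rightarrow> 'a mat" where
  "row_of v = mat 1 (dim_vec v) (\<lambda>(_, k). v $ k)"

definition alpha_phi :: "'a::comm_ring_1 mat \<Rightarrow> 'a vec \<Rightarrow> 'a mat" where
  "alpha_phi phi v = 1\<^sub>m (dim_row phi - 1)
     + transpose_mat (blk_d phi) * row_of v * blk_nu phi"

definition beta_phi :: "'a::comm_ring_1 mat \<Rightarrow> 'a vec \<Rightarrow> 'a mat" where
  "beta_phi phi v = 1\<^sub>m (dim_row phi - 1)
     + blk_mu phi * transpose_mat (row_of v) * blk_c phi"

definition E_phi :: "'a::comm_ring_1 mat \<Rightarrow> 'a mat set" where
  "E_phi phi = gen_subgroup (dim_row phi - 1)
     ({alpha_phi phi v | v. dim_vec v = dim_row phi - 1}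
      \<union> {beta_phi phi v | v. dim_vec v = dim_row phi - 1})"

definition one_perp :: "'a::comm_ring_1 mat \<Rightarrow> 'a mat" where
  "one_perp rho = four_block_mat (1\<^sub>m 1) (0\<^sub>m 1 (dim_col rho)) (0\<^sub>m (dim_row rho) 1) rho"

end

theory Submission
  imports Defs
begin

lemma mult_entry:
  assumes "A \<in> carrier_mat N K" "B \<in> carrier_mat K M" "i < N" "j < M"
  shows "(A*B)$$(i,j) = (\<Sum>k<K. A$$(i,k) * B$$(k,j))"
  using assms by (auto simp: scalar_prod_def atLeast0LessThan intro!: sum.cong)

definition Fm :: "nat \<Rightarrow> (nat \<Rightarrow> 'a::comm_ring_1) \<Rightarrow> (nat \<Rightarrow> 'a) \<Rightarrow> 'a mat" where
  "Fm N p q = mat N N (\<lambda>(r,c). (if r = c then 1 else 0) + (if r = 0 then p c else 0) + (if c = 1 then q r else 0))"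

lemma Fm_carrier[simp]: "Fm N p q \<in> carrier_mat N N" by (simp add: Fm_def)
lemma Fm_dims[simp]: "dim_row (Fm N p q) = N" "dim_col (Fm N p q) = N" by (simp_all add: Fm_def)
lemma Fm_index[simp]: "r < N \<Longrightarrow> c < N \<Longrightarrow> Fm N p q $$ (r,c) =
   (if r = c then 1 else 0) + (if r = 0 then p c else 0) + (if c = 1 then q r else 0)"
  by (simp add: Fm_def)

lemma mat_eqN:
  assumes "A \<in> carrier_mat N N" "B \<in> carrier_mat N N" "\<And>r c. r < N \<Longrightarrow> c < N \<Longrightarrow> A $$ (r,c) = B $$ (r,c)"
  shows "A = B"
  using assms by (intro eq_matI) auto

lemma Fm_mult:
  assumes "p 0 = 0" "q' 1 = 0"
  shows "Fm N p q * Fm N p' q' = Fm N (\<lambda>c. p c + p' c + (if c = 1 then (\<Sum>k<N. p k * q' k) else 0)) (\<lambda>r. q r + q' r)"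
proof (rule mat_eqN[OF mult_carrier_mat[OF Fm_carrier Fm_carrier] Fm_carrier])
  fix r c assume r: "r < N" and c: "c < N"
  have "(Fm N p q * Fm N p' q') $$ (r,c) = (\<Sum>k<N. Fm N p q $$ (r,k) * Fm N p' q' $$ (k,c))"
    by (rule mult_entry[OF Fm_carrier Fm_carrier r c])
  also have "\<dots> = (\<Sum>k<N. ((if r = k then 1 else 0) + (if r = 0 then p k else 0) + (if k = 1 then q r else 0)) *
       ((if k = c then 1 else 0) + (if k = 0 then p' c else 0) + (if c = 1 then q' k else 0)))"
    by (rule sum.cong, auto simp: r c)
  also have "\<dots> = (if r = c then 1 else 0) + (if r = 0 then p c + p' c + (if c = 1 then (\<Sum>k<N. p k * q' k) else 0) else 0) + (if c = 1 then q r + q' r else 0)"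
    using r c assms by (simp add: algebra_simps sum.distrib if_distrib[where f="\<lambda>x. x * _"] if_distrib[where f="\<lambda>x. _ * x"] sum.delta sum.delta' cong: if_cong)
  finally show "(Fm N p q * Fm N p' q') $$ (r,c) = Fm N (\<lambda>c. p c + p' c + (if c = 1 then (\<Sum>k<N. p k * q' k) else 0)) (\<lambda>r. q r + q' r) $$ (r,c)"
    using r c by simp
qed
section \<open>generic subgroup facts\<close>

lemma gen_sub_inv:
  assumes G: "\<And>g. g \<in> G \<Longrightarrow> g \<in> carrier_mat m m \<and> (\<exists>h\<in>carrier_mat m m. g*h = 1\<^sub>m m \<and> h*g = 1\<^sub>m m)"
  shows "A \<in> gen_subgroup m G \<Longrightarrow> A \<in> carrier_mat m m \<and> (\<exists>B\<in>gen_subgroup m G. B \<in> carrier_mat m m \<and> A*B = 1\<^sub>m m \<and> B*A = 1\<^sub>m m)"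
proof (induction rule: gen_subgroup.induct)
  case gen_one
  then show ?case by (auto intro!: bexI[of _ "1\<^sub>m m"] gen_subgroup.gen_one)
next
  case (gen_gen g)
  from G[OF gen_gen] obtain h where h: "h \<in> carrier_mat m m" "g*h = 1\<^sub>m m" "h*g = 1\<^sub>m m" by auto
  have "h \<in> gen_subgroup m G"
    by (rule gen_subgroup.gen_inv[OF gen_subgroup.gen_gen[OF gen_gen] h])
  with h G[OF gen_gen] show ?case by auto
next
  case (gen_mult A B)
  then obtain A' B' where A': "A' \<in> gen_subgroup m G" "A' \<in> carrier_mat m m" "A*A' = 1\<^sub>m m" "A'*A = 1\<^sub>m m"
    and B': "B' \<in> gen_subgroup m G" "B' \<in> carrier_mat m m" "B*B' = 1\<^sub>m m" "B'*B = 1\<^sub>m m"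
    and c: "A \<in> carrier_mat m m" "B \<in> carrier_mat m m" by blast
  have e1: "A * B * (B' * A') = A * (B * (B' * A'))" using c A' B' by (intro assoc_mult_mat) auto
  have e2: "(B * B') * A' = B * (B' * A')" using c A' B' by (intro assoc_mult_mat) auto
  have 1: "A * B * (B' * A') = 1\<^sub>m m" unfolding e1 e2[symmetric] using c A' B' by (simp del: assoc_mult_mat)
  have e3: "B' * A' * (A * B) = B' * (A' * (A * B))" using c A' B' by (intro assoc_mult_mat) auto
  have e4: "(A' * A) * B = A' * (A * B)" using c A' B' by (intro assoc_mult_mat) auto
  have 2: "B' * A' * (A * B) = 1\<^sub>m m" unfolding e3 e4[symmetric] using c A' B' by (simp del: assoc_mult_mat)
  show ?case using 1 2 c A' B' by (auto intro!: bexI[of _ "B' * A'"] gen_subgroup.gen_mult)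
next
  case (gen_inv A B)
  then show ?case by auto
qed

lemma sigma_sigma[simp]: "sigma (sigma k) = k"
  unfolding sigma_def by (cases k) auto
lemma se_index:
  assumes "r < 2*n" "c < 2*n"
  shows "se n i j z $$ (r,c) = (if r = c then 1 else 0) + (if r + 1 = i \<and> c + 1 = j then z else 0)
     - (if i = sigma j then 0 else if r + 1 = sigma j \<and> c + 1 = sigma i then (-1)^(i+j) * z else 0)"
  using assms unfolding se_def unit_mat_def by simp
lemma unit_mat_carrier[simp]: "unit_mat m i j \<in> carrier_mat m m"
  unfolding unit_mat_def by simp
lemma se_carrier[simp]: "se n i j z \<in> carrier_mat (2*n) (2*n)"
  unfolding se_def carrier_mat_def unit_mat_def by simp
lemma se_dims[simp]: "dim_row (se n i j z) = 2*n" "dim_col (se n i j z) = 2*n"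
  unfolding se_def unit_mat_def by simp_all

lemma se_transpose: "transpose_mat (se n i j z) = se n j i z"
proof (rule eq_matI)
  fix r c assume "r < dim_row (se n j i z)" "c < dim_col (se n j i z)"
  hence rc: "r < 2*n" "c < 2*n" by auto
  have ij: "(i = sigma j) = (j = sigma i)"
  proof
    assume "i = sigma j" then show "j = sigma i" by simp
  next
    assume "j = sigma i" then show "i = sigma j" by simp
  qed
  have "transpose_mat (se n i j z) $$ (r, c) = se n i j z $$ (c, r)" using rc by simp
  also have "\<dots> = (if c = r then 1 else 0) + (if c + 1 = i \<and> r + 1 = j then z else 0)
     - (if i = sigma j then 0 else if c + 1 = sigma j \<and> r + 1 = sigma i then (-1)^(i+j) * z else 0)"
    by (rule se_index[OF rc(2) rc(1)])
  also have "\<dots> = (if r = c then 1 else 0) + (if r + 1 = j \<and> c + 1 = i then z else 0)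
     - (if j = sigma i then 0 else if r + 1 = sigma i \<and> c + 1 = sigma j then (-1)^(j+i) * z else 0)"
    unfolding ij by (simp only: add.commute[of i j] conj_commute eq_commute[of c r])
  also have "\<dots> = se n j i z $$ (r, c)" by (rule se_index[OF rc, symmetric])
  finally show "transpose_mat (se n i j z) $$ (r, c) = se n j i z $$ (r, c)" .
qed auto

definition Gsp :: "nat \<Rightarrow> 'a::comm_ring_1 mat set" where
  "Gsp n = {se n i j z | i j z. 1 \<le> i \<and> i \<le> 2*n \<and> 1 \<le> j \<and> j \<le> 2*n \<and> i \<noteq> j}"

lemma ESp_Gsp: "ESp n = gen_subgroup (2*n) (Gsp n)" by (simp add: ESp_def Gsp_def)

lemma ESp_transpose_aux:
  "A \<in> gen_subgroup (2*n) (Gsp n) \<Longrightarrow> A \<in> carrier_mat (2*n) (2*n) \<and> transpose_mat A \<in> gen_subgroup (2*n) (Gsp n)"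
proof (induction rule: gen_subgroup.induct)
  case gen_one
  then show ?case by (auto intro: gen_subgroup.gen_one)
next
  case (gen_gen g)
  then obtain i j z where g: "g = se n i j z" "1 \<le> i" "i \<le> 2*n" "1 \<le> j" "j \<le> 2*n" "i \<noteq> j"
    by (auto simp: Gsp_def)
  have "se n j i z \<in> Gsp n" using g by (auto simp: Gsp_def)
  then show ?case using g by (auto simp: se_transpose intro: gen_subgroup.gen_gen)
next
  case (gen_mult A B)
  then show ?case by (auto simp: transpose_mult[of A "2*n" "2*n" B "2*n"] intro: gen_subgroup.gen_mult)
next
  case (gen_inv A B)
  have "transpose_mat (B * A) = transpose_mat A * transpose_mat B"
    using gen_inv by (intro transpose_mult) auto
  then have 1: "transpose_mat A * transpose_mat B = 1\<^sub>m (2*n)" using gen_inv(4) by simp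
  have "transpose_mat (A * B) = transpose_mat B * transpose_mat A"
    using gen_inv by (intro transpose_mult) auto
  then have 2: "transpose_mat B * transpose_mat A = 1\<^sub>m (2*n)" using gen_inv(3) by simp
  show ?case using gen_inv(2) gen_subgroup.gen_inv[OF conjunct2[OF gen_inv(5)] _ 1 2] by auto
qed

lemma ESp_carrier: "A \<in> ESp n \<Longrightarrow> A \<in> carrier_mat (2*n) (2*n)"
  using ESp_transpose_aux by (auto simp: ESp_Gsp)
lemma ESp_transpose: "A \<in> ESp n \<Longrightarrow> transpose_mat A \<in> ESp n"
  using ESp_transpose_aux by (auto simp: ESp_Gsp)
lemma ESp_mult: "A \<in> ESp n \<Longrightarrow> B \<in> ESp n \<Longrightarrow> A * B \<in> ESp n"
  by (auto simp: ESp_Gsp intro: gen_subgroup.gen_mult)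
lemma ESp_one: "1\<^sub>m (2*n) \<in> ESp n"
  by (auto simp: ESp_Gsp intro: gen_subgroup.gen_one)
lemma ESp_se: "1 \<le> i \<Longrightarrow> i \<le> 2*n \<Longrightarrow> 1 \<le> j \<Longrightarrow> j \<le> 2*n \<Longrightarrow> i \<noteq> j \<Longrightarrow> se n i j z \<in> ESp n"
  by (auto simp: ESp_Gsp Gsp_def intro!: gen_subgroup.gen_gen)


lemma sigma_ge3: "3 \<le> j \<Longrightarrow> 3 \<le> sigma j" unfolding sigma_def by (cases "j = 3") auto
lemma sigma_1[simp]: "sigma 1 = 2" "sigma (Suc 0) = 2" and sigma_2[simp]: "sigma 2 = 1" "sigma (Suc (Suc 0)) = 1" by (auto simp: sigma_def)

lemma Fm_zero: "Fm N (\<lambda>_. 0) (\<lambda>_. 0) = 1\<^sub>m N"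
  by (rule mat_eqN) auto

lemma se_1_2: "se n 1 2 z = Fm (2*n) (\<lambda>c. if c = 1 then z else 0) (\<lambda>_. 0)"
  by (rule mat_eqN[OF se_carrier Fm_carrier]) (auto simp: se_index)

lemma se_1_j: assumes "3 \<le> j"
  shows "se n 1 j z = Fm (2*n) (\<lambda>c. if c + 1 = j then z else 0) (\<lambda>r. if r + 1 = sigma j then - ((-1)^(1+j) * z) else 0)"
proof (rule mat_eqN[OF se_carrier Fm_carrier])
  fix r c assume rc: "r < 2*n" "c < 2*n"
  have "1 \<noteq> sigma j" "j \<noteq> 1" using sigma_ge3[OF assms] assms by auto
  then show "se n 1 j z $$ (r, c) = Fm (2 * n) (\<lambda>c. if c + 1 = j then z else 0) (\<lambda>r. if r + 1 = sigma j then - ((- 1) ^ (1 + j) * z) else 0) $$ (r, c)"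
    using rc by (auto simp: se_index)
qed

lemma Fm_cong: "(\<And>c. c < N \<Longrightarrow> f c = f' c) \<Longrightarrow> (\<And>r. r < N \<Longrightarrow> g r = g' r) \<Longrightarrow> Fm N f g = Fm N f' g'"
  by (rule mat_eqN) auto

lemma F_lemma:
  assumes p0: "p 0 = 0"
  shows "N \<le> 2*n \<Longrightarrow> \<exists>q. q 0 = 0 \<and> q 1 = 0 \<and> Fm (2*n) (\<lambda>c. if c < N then p c else 0) q \<in> ESp n"
proof (induction N)
  case 0
  have "Fm (2*n) (\<lambda>c. if c < 0 then p c else 0) (\<lambda>_. 0) = 1\<^sub>m (2*n)"
    by (simp add: Fm_zero)
  then show ?case using ESp_one[of n] by (intro exI[of _ "\<lambda>_. 0"]) simp
next
  case (Suc N)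
  then obtain q where q: "q 0 = 0" "q 1 = 0" "Fm (2*n) (\<lambda>c. if c < N then p c else 0) q \<in> ESp n" by auto
  have pN0: "(\<lambda>c. if c < N then p c else 0) 0 = 0" using p0 by simp
  consider "N = 0" | "N = 1" | "N \<ge> 2" by linarith
  then show ?case
  proof cases
    case 1
    have "Fm (2*n) (\<lambda>c. if c < Suc N then p c else 0) q = Fm (2*n) (\<lambda>c. if c < N then p c else 0) q"
      using 1 p0 by (intro Fm_cong) auto
    then show ?thesis using q by auto
  next
    case 2
    have "Fm (2*n) (\<lambda>c. if c < N then p c else 0) q * se n 1 2 (p 1)
      = Fm (2*n) (\<lambda>c. (if c < N then p c else 0) + (if c = 1 then p 1 else 0) + (if c = 1 then (\<Sum>k<2*n. (if k < N then p k else 0) * 0) else 0)) (\<lambda>r. q r + 0)"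
      unfolding se_1_2 by (rule Fm_mult[where p="\<lambda>c. if c < N then p c else 0"]) (use p0 in simp_all)
    also have "\<dots> = Fm (2*n) (\<lambda>c. if c < Suc N then p c else 0) q"
      using 2 p0 by (intro Fm_cong) auto
    finally have e: "Fm (2*n) (\<lambda>c. if c < N then p c else 0) q * se n 1 2 (p 1) = Fm (2*n) (\<lambda>c. if c < Suc N then p c else 0) q" .
    have "se n 1 2 (p 1) \<in> ESp n" using Suc.prems 2 by (intro ESp_se) auto
    then have "Fm (2*n) (\<lambda>c. if c < Suc N then p c else 0) q \<in> ESp n" unfolding e[symmetric] by (rule ESp_mult[OF q(3)])
    then show ?thesis using q by (intro exI[of _ q]) auto
  next
    case 3
    define q1 where "q1 = (\<lambda>r. if r + 1 = sigma (N+1) then - ((-1)^(1+(N+1)) * p N) else (0::'a))"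
    define S where "S = (\<Sum>k<2*n. (if k < N then p k else 0) * q1 k)"
    have s3: "3 \<le> sigma (N+1)" using sigma_ge3[of "N+1"] 3 by auto
    have q10: "q1 0 = 0" "q1 1 = 0" using s3 by (auto simp: q1_def)
    have se1: "se n 1 (N+1) (p N) = Fm (2*n) (\<lambda>c. if c + 1 = N + 1 then p N else 0) q1"
      unfolding q1_def by (rule se_1_j) (use 3 in auto)
    have e1: "Fm (2*n) (\<lambda>c. if c < N then p c else 0) q * se n 1 (N+1) (p N)
      = Fm (2*n) (\<lambda>c. (if c < N then p c else 0) + (if c + 1 = N + 1 then p N else 0) + (if c = 1 then S else 0)) (\<lambda>r. q r + q1 r)"
      unfolding se1 S_def by (rule Fm_mult[where p="\<lambda>c. if c < N then p c else 0"]) (use p0 q10 in simp_all)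
    have e2: "Fm (2*n) (\<lambda>c. (if c < N then p c else 0) + (if c + 1 = N + 1 then p N else 0) + (if c = 1 then S else 0)) (\<lambda>r. q r + q1 r) * se n 1 2 (- S)
      = Fm (2*n) (\<lambda>c. ((if c < N then p c else 0) + (if c + 1 = N + 1 then p N else 0) + (if c = 1 then S else 0)) + (if c = 1 then - S else 0) + (if c = 1 then (\<Sum>k<2*n. ((if k < N then p k else 0) + (if k + 1 = N + 1 then p N else 0) + (if k = 1 then S else 0)) * 0) else 0)) (\<lambda>r. (q r + q1 r) + 0)"
      unfolding se_1_2 by (rule Fm_mult) (use p0 3 in simp_all)
    have e3: "\<dots> = Fm (2*n) (\<lambda>c. if c < Suc N then p c else 0) (\<lambda>r. q r + q1 r)"
      using 3 by (intro Fm_cong) auto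
    have m1: "se n 1 (N+1) (p N) \<in> ESp n" using Suc.prems 3 by (intro ESp_se) auto
    have m2: "se n 1 2 (- S) \<in> ESp n" using Suc.prems 3 by (intro ESp_se) auto
    have "Fm (2*n) (\<lambda>c. if c < Suc N then p c else 0) (\<lambda>r. q r + q1 r) \<in> ESp n"
      unfolding e3[symmetric] e2[symmetric] e1[symmetric] by (intro ESp_mult q m1 m2)
    then show ?thesis using q q10 by (intro exI[of _ "\<lambda>r. q r + q1 r"]) auto
  qed
qed


definition tau :: "nat \<Rightarrow> nat" where "tau r = (if even r then r + 1 else r - 1)"
definition sg :: "nat \<Rightarrow> 'a::comm_ring_1" where "sg r = (if even r then 1 else -1)"

lemma tau_tau[simp]: "tau (tau r) = r" unfolding tau_def by (cases r) auto
lemma sg_tau[simp]: "sg (tau r) = - sg r" unfolding tau_def sg_def by (cases r) auto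
lemma sg_sq[simp]: "sg r * sg r = 1" unfolding sg_def by auto
lemma tau_less: "r < 2*n \<Longrightarrow> tau r < 2*n" unfolding tau_def by (auto; presburger)
lemma tau_eq: "(c = tau k) = (tau c = k)" by (metis tau_tau)

lemma psi_index: "r < 2*n \<Longrightarrow> c < 2*n \<Longrightarrow> psi n $$ (r,c) = (if c = tau r then sg r else 0)"
  unfolding psi_def tau_def sg_def by (cases "even r") auto

lemma psi_carrier[simp]: "psi n \<in> carrier_mat (2*n) (2*n)" unfolding psi_def by simp
lemma psi_dims[simp]: "dim_row (psi n) = 2*n" "dim_col (psi n) = 2*n" unfolding psi_def by simp_all

lemma psi_sq: "psi n * psi n = - 1\<^sub>m (2*n)"
proof (rule mat_eqN[of _ "2*n"])
  fix r c assume rc: "r < 2*n" "c < 2*n"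
  have "(psi n * psi n) $$ (r,c) = (\<Sum>k<2*n. psi n $$ (r,k) * psi n $$ (k,c))"
    by (rule mult_entry[OF psi_carrier psi_carrier rc])
  also have "\<dots> = (\<Sum>k<2*n. if k = tau r then sg r * psi n $$ (tau r, c) else 0)"
    by (rule sum.cong) (use rc in \<open>auto simp: psi_index\<close>)
  also have "\<dots> = sg r * psi n $$ (tau r, c)" using tau_less[OF rc(1)] by simp
  also have "\<dots> = (if r = c then -1 else 0)" using rc tau_less[OF rc(1)] by (auto simp: psi_index tau_eq)
  also have "\<dots> = (- 1\<^sub>m (2*n)) $$ (r,c)" using rc by simp
  finally show "(psi n * psi n) $$ (r,c) = (- 1\<^sub>m (2*n)) $$ (r,c)" .
qed auto

lemma psi_inv1: "psi n * (- psi n) = 1\<^sub>m (2*n)"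
proof -
  have "psi n * (- psi n) = - (psi n * psi n)" by (rule uminus_mult_right_mat) simp
  also have "\<dots> = - (- 1\<^sub>m (2*n))" by (simp only: psi_sq)
  also have "\<dots> = 1\<^sub>m (2*n)" by (rule eq_matI) auto
  finally show ?thesis .
qed

lemma psi_inv2: "(- psi n) * psi n = 1\<^sub>m (2*n)"
proof -
  have "(- psi n) * psi n = - (psi n * psi n)" by (rule uminus_mult_left_mat) simp
  also have "\<dots> = - (- 1\<^sub>m (2*n))" by (simp only: psi_sq)
  also have "\<dots> = 1\<^sub>m (2*n)" by (rule eq_matI) auto
  finally show ?thesis .
qed

lemma mat_inv_psi: "mat_inv (psi n) = - psi n"
proof -
  note inv1 = psi_inv1[of n] and inv2 = psi_inv2[of n]
  show ?thesis unfolding mat_inv_def psi_dims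
  proof (rule the_equality)
    show "- psi n \<in> carrier_mat (2*n) (2*n) \<and> psi n * - psi n = 1\<^sub>m (2*n) \<and> - psi n * psi n = 1\<^sub>m (2*n)"
      by (intro conjI inv1 inv2) simp
  next
    fix B assume B: "B \<in> carrier_mat (2*n) (2*n) \<and> psi n * B = 1\<^sub>m (2*n) \<and> B * psi n = 1\<^sub>m (2*n)"
    have Bc: "B \<in> carrier_mat (2*n) (2*n)" and B1: "B * psi n = 1\<^sub>m (2*n)" using B by auto
    have e1: "B * (psi n * (- psi n)) = B" unfolding inv1 using Bc by simp
    have e2: "B * (psi n * (- psi n)) = (B * psi n) * (- psi n)" using Bc by (intro assoc_mult_mat[symmetric]) auto
    have e3: "(B * psi n) * (- psi n) = - psi n" unfolding B1 by simp
    show "B = - psi n" using e1 e2 e3 by simp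
  qed
qed


lemma sum_less1: "(\<Sum>a<Suc 0. f a) = f 0" by simp

lemma alpha_Fm:
  assumes n: "n \<ge> 1" and v: "dim_vec v = 2*n - 1"
  shows "alpha_phi (psi n) v = Fm (2*n - 1) (\<lambda>c. - (\<Sum>k<2*n-1. v $ k * psi n $$ (k+1, c+1))) (\<lambda>_. 0)"
proof -
  let ?N = "2*n - 1"
  have cd: "transpose_mat (blk_d (psi n)) \<in> carrier_mat ?N 1" by (simp add: blk_d_def)
  have cR: "row_of v \<in> carrier_mat 1 ?N" using v by (simp add: row_of_def)
  have cnu: "blk_nu (psi n) \<in> carrier_mat ?N ?N" by (simp add: blk_nu_def)
  have cX: "transpose_mat (blk_d (psi n)) * row_of v \<in> carrier_mat ?N ?N" by (rule mult_carrier_mat[OF cd cR])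
  have cY: "transpose_mat (blk_d (psi n)) * row_of v * blk_nu (psi n) \<in> carrier_mat ?N ?N" by (rule mult_carrier_mat[OF cX cnu])
  show ?thesis unfolding alpha_phi_def psi_dims
  proof (rule mat_eqN[of _ ?N])
    show "1\<^sub>m ?N + transpose_mat (blk_d (psi n)) * row_of v * blk_nu (psi n) \<in> carrier_mat ?N ?N" using cY by simp
  next
    fix r c assume rc: "r < ?N" "c < ?N"
    have X: "(transpose_mat (blk_d (psi n)) * row_of v) $$ (r,k) = (if r = 0 then - v $ k else 0)" if k: "k < ?N" for k
    proof -
      have "(transpose_mat (blk_d (psi n)) * row_of v) $$ (r,k) = (\<Sum>a<1. transpose_mat (blk_d (psi n)) $$ (r,a) * row_of v $$ (a,k))"
        by (rule mult_entry[OF cd cR rc(1) k])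
      also have "\<dots> = blk_d (psi n) $$ (0,r) * v $ k" using rc k v by (simp add: blk_d_def row_of_def)
      also have "\<dots> = (if r = 0 then - v $ k else 0)" using rc k n
        by (simp add: blk_d_def mat_inv_psi psi_index tau_def sg_def)
      finally show ?thesis .
    qed
    have "(transpose_mat (blk_d (psi n)) * row_of v * blk_nu (psi n)) $$ (r,c)
       = (\<Sum>k<?N. (transpose_mat (blk_d (psi n)) * row_of v) $$ (r,k) * blk_nu (psi n) $$ (k,c))"
      by (rule mult_entry[OF cX cnu rc])
    also have "\<dots> = (\<Sum>k<?N. (if r = 0 then - (v $ k * psi n $$ (k+1, c+1)) else 0))"
      by (rule sum.cong) (use rc in \<open>auto simp: X blk_nu_def\<close>)
    also have "\<dots> = (if r = 0 then - (\<Sum>k<?N. v $ k * psi n $$ (k+1, c+1)) else 0)"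
      by (simp add: sum_negf)
    finally have Y: "(transpose_mat (blk_d (psi n)) * row_of v * blk_nu (psi n)) $$ (r,c) = (if r = 0 then - (\<Sum>k<?N. v $ k * psi n $$ (k+1, c+1)) else 0)" .
    show "(1\<^sub>m ?N + transpose_mat (blk_d (psi n)) * row_of v * blk_nu (psi n)) $$ (r, c) =
        Fm ?N (\<lambda>c. - (\<Sum>k<?N. v $ k * psi n $$ (k + 1, c + 1))) (\<lambda>_. 0) $$ (r, c)"
      using rc carrier_matD[OF cY] by (simp add: Y)
  qed simp
qed

lemma beta_Fm:
  assumes n: "n \<ge> 1" and v: "dim_vec v = 2*n - 1"
  shows "beta_phi (psi n) v = transpose_mat (Fm (2*n - 1) (\<lambda>r. \<Sum>k<2*n-1. psi n $$ (r+1, k+1) * v $ k) (\<lambda>_. 0))"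
proof -
  let ?N = "2*n - 1"
  have cmu: "blk_mu (psi n) \<in> carrier_mat ?N ?N" by (simp add: blk_mu_def)
  have cR: "transpose_mat (row_of v) \<in> carrier_mat ?N 1" using v by (simp add: row_of_def)
  have cc: "blk_c (psi n) \<in> carrier_mat 1 ?N" by (simp add: blk_c_def)
  have cX: "blk_mu (psi n) * transpose_mat (row_of v) \<in> carrier_mat ?N 1" by (rule mult_carrier_mat[OF cmu cR])
  have cY: "blk_mu (psi n) * transpose_mat (row_of v) * blk_c (psi n) \<in> carrier_mat ?N ?N" by (rule mult_carrier_mat[OF cX cc])
  show ?thesis unfolding beta_phi_def psi_dims
  proof (rule mat_eqN[of _ ?N])
    show "1\<^sub>m ?N + blk_mu (psi n) * transpose_mat (row_of v) * blk_c (psi n) \<in> carrier_mat ?N ?N" using cY by simp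
    show "transpose_mat (Fm ?N (\<lambda>r. \<Sum>k<?N. psi n $$ (r+1, k+1) * v $ k) (\<lambda>_. 0)) \<in> carrier_mat ?N ?N" by simp
  next
    fix r c assume rc: "r < ?N" "c < ?N"
    have X: "(blk_mu (psi n) * transpose_mat (row_of v)) $$ (r,0) = - (\<Sum>k<?N. psi n $$ (r+1, k+1) * v $ k)"
    proof -
      have "(blk_mu (psi n) * transpose_mat (row_of v)) $$ (r,0) = (\<Sum>k<?N. blk_mu (psi n) $$ (r,k) * transpose_mat (row_of v) $$ (k,0))"
        by (rule mult_entry[OF cmu cR rc(1)]) simp
      also have "\<dots> = (\<Sum>k<?N. - (psi n $$ (r+1, k+1) * v $ k))"
        by (rule sum.cong) (use rc v n in \<open>auto simp: blk_mu_def row_of_def mat_inv_psi\<close>)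
      finally show ?thesis by (simp add: sum_negf)
    qed
    have "(blk_mu (psi n) * transpose_mat (row_of v) * blk_c (psi n)) $$ (r,c)
       = (\<Sum>a<1. (blk_mu (psi n) * transpose_mat (row_of v)) $$ (r,a) * blk_c (psi n) $$ (a,c))"
      by (rule mult_entry[OF cX cc rc])
    also have "\<dots> = (blk_mu (psi n) * transpose_mat (row_of v)) $$ (r,0) * blk_c (psi n) $$ (0,c)" by simp
    also have "\<dots> = (if c = 0 then (\<Sum>k<?N. psi n $$ (r+1, k+1) * v $ k) else 0)"
      unfolding X using rc n by (simp add: blk_c_def psi_index tau_def sg_def)
    finally have Y: "(blk_mu (psi n) * transpose_mat (row_of v) * blk_c (psi n)) $$ (r,c) = (if c = 0 then (\<Sum>k<?N. psi n $$ (r+1, k+1) * v $ k) else 0)" .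
    show "(1\<^sub>m ?N + blk_mu (psi n) * transpose_mat (row_of v) * blk_c (psi n)) $$ (r, c) =
        transpose_mat (Fm ?N (\<lambda>r. \<Sum>k<?N. psi n $$ (r+1, k+1) * v $ k) (\<lambda>_. 0)) $$ (r, c)"
      using rc carrier_matD[OF cY] by (simp add: Y)
  qed
qed


lemma one_perp_carrier: "A \<in> carrier_mat N N \<Longrightarrow> one_perp A \<in> carrier_mat (Suc N) (Suc N)"
  unfolding one_perp_def using four_block_carrier_mat[of "1\<^sub>m 1" 1 1 A N N] by auto

lemma one_perp_index: "A \<in> carrier_mat N N \<Longrightarrow> r < Suc N \<Longrightarrow> c < Suc N \<Longrightarrow>
  one_perp A $$ (r,c) = (if r = 0 \<and> c = 0 then 1 else if r = 0 \<or> c = 0 then 0 else A $$ (r - 1, c - 1))"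
  unfolding one_perp_def by auto

lemma one_perp_mult: assumes "A \<in> carrier_mat N N" "B \<in> carrier_mat N N"
  shows "one_perp (A * B) = one_perp A * one_perp B"
proof -
  have "one_perp A * one_perp B = four_block_mat (1\<^sub>m 1 * 1\<^sub>m 1 + 0\<^sub>m 1 N * 0\<^sub>m N 1) (1\<^sub>m 1 * 0\<^sub>m 1 N + 0\<^sub>m 1 N * B)
    (0\<^sub>m N 1 * 1\<^sub>m 1 + A * 0\<^sub>m N 1) (0\<^sub>m N 1 * 0\<^sub>m 1 N + A * B)"
    unfolding one_perp_def carrier_matD[OF assms(1)] carrier_matD[OF assms(2)] using assms by (intro mult_four_block_mat) auto
  also have "\<dots> = one_perp (A * B)" unfolding one_perp_def using assms
    by (intro cong_four_block_mat) auto
  finally show ?thesis by simp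
qed

lemma one_perp_one: "one_perp (1\<^sub>m N) = 1\<^sub>m (Suc N)"
  unfolding one_perp_def using four_block_one_mat[of 1 N] by simp

lemma one_perp_Fm: "one_perp (Fm N f (\<lambda>_. 0)) = transpose_mat (Fm (Suc N) (\<lambda>_. 0) (\<lambda>c. if c = 0 then 0 else f (c - 1)))"
proof (rule mat_eqN[of _ "Suc N"])
  show "one_perp (Fm N f (\<lambda>_. 0)) \<in> carrier_mat (Suc N) (Suc N)" by (rule one_perp_carrier) simp
  fix r c assume rc: "r < Suc N" "c < Suc N"
  show "one_perp (Fm N f (\<lambda>_. 0)) $$ (r, c) = transpose_mat (Fm (Suc N) (\<lambda>_. 0) (\<lambda>c. if c = 0 then 0 else f (c - 1))) $$ (r, c)"
    using rc by (auto simp: one_perp_index[of _ N])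
qed simp

lemma one_perp_tFm: "one_perp (transpose_mat (Fm N g (\<lambda>_. 0))) = Fm (Suc N) (\<lambda>_. 0) (\<lambda>r. if r = 0 then 0 else g (r - 1))"
proof (rule mat_eqN[of _ "Suc N"])
  show "one_perp (transpose_mat (Fm N g (\<lambda>_. 0))) \<in> carrier_mat (Suc N) (Suc N)" by (rule one_perp_carrier) simp
  fix r c assume rc: "r < Suc N" "c < Suc N"
  show "one_perp (transpose_mat (Fm N g (\<lambda>_. 0))) $$ (r, c) = Fm (Suc N) (\<lambda>_. 0) (\<lambda>r. if r = 0 then 0 else g (r - 1)) $$ (r, c)"
    using rc by (auto simp: one_perp_index[of _ N])
qed simp

lemma Fm_inv: assumes "f 0 = 0"
  shows "Fm N f (\<lambda>_. 0) * Fm N (\<lambda>c. - f c) (\<lambda>_. 0) = 1\<^sub>m N"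
proof -
  have "Fm N f (\<lambda>_. 0) * Fm N (\<lambda>c. - f c) (\<lambda>_. 0) = Fm N (\<lambda>c. f c + - f c + (if c = 1 then \<Sum>k<N. f k * 0 else 0)) (\<lambda>r. 0 + 0)"
    by (rule Fm_mult) (use assms in simp_all)
  also have "\<dots> = Fm N (\<lambda>_. 0) (\<lambda>_. 0)" by (rule Fm_cong) auto
  finally show ?thesis by (simp add: Fm_zero)
qed

lemma Fm_inv_ex: assumes "f 0 = 0"
  shows "\<exists>h\<in>carrier_mat N N. Fm N f (\<lambda>_. 0) * h = 1\<^sub>m N \<and> h * Fm N f (\<lambda>_. 0) = 1\<^sub>m N"
proof -
  have "Fm N (\<lambda>c. - f c) (\<lambda>_. 0) * Fm N (\<lambda>c. - (- f c)) (\<lambda>_. 0) = 1\<^sub>m N"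
    by (rule Fm_inv) (use assms in simp)
  then show ?thesis using Fm_inv[where f=f, OF assms, of N] by (intro bexI[of _ "Fm N (\<lambda>c. - f c) (\<lambda>_. 0)"]) auto
qed

lemma tFm_inv_ex: assumes "f 0 = 0"
  shows "\<exists>h\<in>carrier_mat N N. transpose_mat (Fm N f (\<lambda>_. 0)) * h = 1\<^sub>m N \<and> h * transpose_mat (Fm N f (\<lambda>_. 0)) = 1\<^sub>m N"
proof -
  obtain h where h: "h \<in> carrier_mat N N" "Fm N f (\<lambda>_. 0) * h = 1\<^sub>m N" "h * Fm N f (\<lambda>_. 0) = 1\<^sub>m N"
    using Fm_inv_ex[where f=f, OF assms, of N] by auto
  have "transpose_mat (Fm N f (\<lambda>_. 0)) * transpose_mat h = transpose_mat (h * Fm N f (\<lambda>_. 0))"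
    using h by (intro transpose_mult[symmetric]) auto
  also have "\<dots> = 1\<^sub>m N" using h by simp
  finally have 1: "transpose_mat (Fm N f (\<lambda>_. 0)) * transpose_mat h = 1\<^sub>m N" .
  have "transpose_mat h * transpose_mat (Fm N f (\<lambda>_. 0)) = transpose_mat (Fm N f (\<lambda>_. 0) * h)"
    using h by (intro transpose_mult[symmetric]) auto
  also have "\<dots> = 1\<^sub>m N" using h by simp
  finally have 2: "transpose_mat h * transpose_mat (Fm N f (\<lambda>_. 0)) = 1\<^sub>m N" .
  show ?thesis using 1 2 h by (intro bexI[of _ "transpose_mat h"]) auto
qed

lemma tau_1[simp]: "tau 1 = 0" "tau (Suc 0) = 0" by (auto simp: tau_def)

lemma alpha_f0: assumes "n \<ge> 1" shows "(\<Sum>k<2*n-1. v $ k * psi n $$ (k+1, 0+1)) = 0"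
proof (rule sum.neutral, intro ballI)
  fix k assume "k \<in> {..<2*n-1}"
  then have "k + 1 < 2*n" "1 < 2*n" using assms by auto
  then show "v $ k * psi n $$ (k+1, 0+1) = 0" by (simp add: psi_index tau_eq)
qed

lemma beta_f0: assumes "n \<ge> 1" shows "(\<Sum>k<2*n-1. psi n $$ (0+1, k+1) * v $ k) = 0"
proof (rule sum.neutral, intro ballI)
  fix k assume "k \<in> {..<2*n-1}"
  then have "k + 1 < 2*n" "1 < 2*n" using assms by auto
  then show "psi n $$ (0+1, k+1) * v $ k = 0" by (simp add: psi_index)
qed

definition Gphi :: "nat \<Rightarrow> 'a::comm_ring_1 mat set" where
  "Gphi n = {alpha_phi (psi n) v | v. dim_vec v = 2*n - 1} \<union> {beta_phi (psi n) v | v. dim_vec v = 2*n - 1}"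

lemma E_phi_Gphi: "E_phi (psi n :: 'a::comm_ring_1 mat) = gen_subgroup (2*n - 1) (Gphi n)"
  unfolding E_phi_def Gphi_def psi_dims ..

lemma Gphi_inv: assumes n: "n \<ge> 1" and g: "g \<in> Gphi n"
  shows "g \<in> carrier_mat (2*n-1) (2*n-1) \<and> (\<exists>h\<in>carrier_mat (2*n-1) (2*n-1). g*h = 1\<^sub>m (2*n-1) \<and> h*g = 1\<^sub>m (2*n-1))"
proof -
  from g obtain v where v: "dim_vec v = 2*n - 1" and gv: "g = alpha_phi (psi n) v \<or> g = beta_phi (psi n) v"
    unfolding Gphi_def by auto
  from gv show ?thesis
  proof
    assume g: "g = alpha_phi (psi n) v"
    show ?thesis unfolding g alpha_Fm[OF n v]
      by (intro conjI Fm_carrier Fm_inv_ex) (use alpha_f0[OF n, of v] in simp)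
  next
    assume g: "g = beta_phi (psi n) v"
    show ?thesis unfolding g beta_Fm[OF n v]
      by (intro conjI tFm_inv_ex) (use beta_f0[OF n, of v] in simp_all)
  qed
qed

lemma E_phi_props: assumes n: "n \<ge> 1" and A: "A \<in> E_phi (psi n :: 'a::comm_ring_1 mat)"
  shows "A \<in> carrier_mat (2*n-1) (2*n-1) \<and> (\<exists>B\<in>E_phi (psi n :: 'a mat). B \<in> carrier_mat (2*n-1) (2*n-1) \<and> A*B = 1\<^sub>m (2*n-1) \<and> B*A = 1\<^sub>m (2*n-1))"
  using gen_sub_inv[of "Gphi n" "2*n-1" A] Gphi_inv[OF n] A unfolding E_phi_Gphi by blast

lemma E_phi_mult: "A \<in> E_phi (psi n) \<Longrightarrow> B \<in> E_phi (psi n) \<Longrightarrow> A * B \<in> E_phi (psi n)"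
  unfolding E_phi_Gphi by (rule gen_subgroup.gen_mult)

lemma E_phi_one: "1\<^sub>m (2*n-1) \<in> E_phi (psi n)"
  unfolding E_phi_Gphi by (rule gen_subgroup.gen_one)

lemma E_phi_gen: "dim_vec v = 2*n - 1 \<Longrightarrow> alpha_phi (psi n) v \<in> E_phi (psi n)"
  "dim_vec v = 2*n - 1 \<Longrightarrow> beta_phi (psi n) v \<in> E_phi (psi n)"
  unfolding E_phi_Gphi Gphi_def by (auto intro: gen_subgroup.gen_gen)


definition vq :: "nat \<Rightarrow> (nat \<Rightarrow> 'a::comm_ring_1) \<Rightarrow> 'a vec" where
  "vq n q = vec (2*n - 1) (\<lambda>k. sg (k+1) * q (tau (k+1)))"

lemma vq_dim[simp]: "dim_vec (vq n q) = 2*n - 1" by (simp add: vq_def)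

lemma sum_shift_delta: "(\<Sum>k<(N::nat). if k + 1 = t then a else 0) = (if 1 \<le> t \<and> t \<le> N then a else 0)"
proof -
  have "(\<Sum>k<N. if k + 1 = t then a else 0) = (\<Sum>k<N. if k = t - 1 then (if 1 \<le> t then a else 0) else 0)"
    by (rule sum.cong) auto
  also have "\<dots> = (if 1 \<le> t \<and> t \<le> N then a else 0)" by auto
  finally show ?thesis .
qed

lemma tau_0_iff: "(tau c = 0) = (c = 1)" unfolding tau_def by (cases c) (auto simp: odd_pos)
lemma tau_ge1: "(Suc 0 \<le> tau c) = (c \<noteq> 1)" using tau_0_iff[of c] by linarith
lemma sg_sq2[simp]: "sg r * (sg r * x) = (x::'a::comm_ring_1)" by (simp add: mult.assoc[symmetric])
lemma tau_sym: "tau c = k \<Longrightarrow> tau k = c" by (metis tau_tau)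

lemma alpha_q: assumes n: "n \<ge> 1" and q: "q 0 = 0" "q 1 = 0"
  shows "one_perp (alpha_phi (psi n) (vq n q)) = transpose_mat (Fm (2*n) (\<lambda>_. 0) (\<lambda>c. - q c))"
proof -
  have N: "Suc (2*n - 1) = 2*n" using n by simp
  have "one_perp (alpha_phi (psi n) (vq n q)) = transpose_mat (Fm (2*n) (\<lambda>_. 0)
     (\<lambda>c. if c = 0 then 0 else - (\<Sum>k<2*n-1. vq n q $ k * psi n $$ (k+1, c - 1 + 1))))"
    unfolding alpha_Fm[OF n vq_dim] one_perp_Fm N ..
  also have "\<dots> = transpose_mat (Fm (2*n) (\<lambda>_. 0) (\<lambda>c. - q c))"
  proof (intro arg_cong[where f=transpose_mat] Fm_cong)
    fix c assume c: "c < 2*n"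
    show "(if c = 0 then 0 else - (\<Sum>k<2*n-1. vq n q $ k * psi n $$ (k+1, c - 1 + 1))) = - q c"
    proof (cases "c = 0")
      case False
      have "(\<Sum>k<2*n-1. vq n q $ k * psi n $$ (k+1, c - 1 + 1)) = (\<Sum>k<2*n-1. if k + 1 = tau c then q c else 0)"
      proof (rule sum.cong)
        fix k assume "k \<in> {..<2*n-1}"
        then have k: "k < 2*n - 1" "k + 1 < 2*n" by auto
        have "vq n q $ k * psi n $$ (k+1, c) = (if k + 1 = tau c then q c else 0)"
        proof (cases "k + 1 = tau c")
          case True
          then have "tau (k+1) = c" by (rule tau_sym[OF sym])
          then show ?thesis using k c True by (simp add: vq_def psi_index mult.commute)
        next
          case False
          then have "c \<noteq> tau (k+1)" using tau_sym by metis
          then show ?thesis using k c False by (simp add: psi_index)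
        qed
        then show "vq n q $ k * psi n $$ (k+1, c - 1 + 1) = (if k + 1 = tau c then q c else 0)" using False by simp
      qed simp
      also have "\<dots> = q c" unfolding sum_shift_delta using tau_less[OF c] q False by (auto simp: tau_0_iff tau_ge1)
      finally show ?thesis using False by simp
    qed (use q in simp)
  qed simp
  finally show ?thesis .
qed

lemma beta_q: assumes n: "n \<ge> 1" and q: "q 0 = 0" "q 1 = 0"
  shows "one_perp (beta_phi (psi n) (vq n q)) = Fm (2*n) (\<lambda>_. 0) (\<lambda>r. - q r)"
proof -
  have N: "Suc (2*n - 1) = 2*n" using n by simp
  have "one_perp (beta_phi (psi n) (vq n q)) = Fm (2*n) (\<lambda>_. 0)
     (\<lambda>r. if r = 0 then 0 else (\<Sum>k<2*n-1. psi n $$ (r - 1 + 1, k+1) * vq n q $ k))"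
    unfolding beta_Fm[OF n vq_dim] one_perp_tFm N ..
  also have "\<dots> = Fm (2*n) (\<lambda>_. 0) (\<lambda>r. - q r)"
  proof (intro Fm_cong)
    fix r assume r: "r < 2*n"
    show "(if r = 0 then 0 else (\<Sum>k<2*n-1. psi n $$ (r - 1 + 1, k+1) * vq n q $ k)) = - q r"
    proof (cases "r = 0")
      case False
      have "(\<Sum>k<2*n-1. psi n $$ (r - 1 + 1, k+1) * vq n q $ k) = (\<Sum>k<2*n-1. if k + 1 = tau r then - q r else 0)"
      proof (rule sum.cong)
        fix k assume "k \<in> {..<2*n-1}"
        then have k: "k < 2*n - 1" "k + 1 < 2*n" by auto
        have "psi n $$ (r, k+1) * vq n q $ k = (if k + 1 = tau r then - q r else 0)"
          using k r by (auto simp: vq_def psi_index)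
        then show "psi n $$ (r - 1 + 1, k+1) * vq n q $ k = (if k + 1 = tau r then - q r else 0)" using False by simp
      qed simp
      also have "\<dots> = - q r" unfolding sum_shift_delta using tau_less[OF r] q False by (auto simp: tau_0_iff tau_ge1)
      finally show ?thesis using False by simp
    qed (use q in simp)
  qed simp
  finally show ?thesis .
qed


lemma F_full: assumes p0: "p 0 = 0"
  shows "\<exists>q. q 0 = 0 \<and> q 1 = 0 \<and> Fm (2*n) p q \<in> ESp n"
proof -
  obtain q where q: "q 0 = 0" "q 1 = 0" "Fm (2*n) (\<lambda>c. if c < 2*n then p c else 0) q \<in> ESp n"
    using F_lemma[where p=p, OF p0, of "2*n" n] by auto
  have "Fm (2*n) (\<lambda>c. if c < 2*n then p c else 0) q = Fm (2*n) p q" by (rule Fm_cong) auto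
  then show ?thesis using q by auto
qed

definition Pset :: "nat \<Rightarrow> 'a::comm_ring_1 mat set" where
  "Pset n = {M. \<exists>\<rho>\<in>E_phi (psi n :: 'a mat). \<exists>s\<in>ESp n. M = one_perp \<rho> * s}"

lemma A_lemma: assumes n: "n \<ge> 1" and w0: "w 0 = 0"
  shows "Fm (2*n) w (\<lambda>_. 0) \<in> Pset n"
proof -
  obtain q where q: "q 0 = 0" "q 1 = 0" "Fm (2*n) w q \<in> ESp n" using F_full[where p=w, OF w0, of n] by blast
  have "one_perp (beta_phi (psi n) (vq n q)) * Fm (2*n) w q = Fm (2*n) (\<lambda>_. 0) (\<lambda>r. - q r) * Fm (2*n) w q"
    unfolding beta_q[OF n q(1,2)] ..
  also have "\<dots> = Fm (2*n) (\<lambda>c. 0 + w c + (if c = 1 then \<Sum>k<2*n. 0 * q k else 0)) (\<lambda>r. - q r + q r)"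
    by (rule Fm_mult) (use q in simp_all)
  also have "\<dots> = Fm (2*n) w (\<lambda>_. 0)" by (rule Fm_cong) auto
  finally have e: "one_perp (beta_phi (psi n) (vq n q)) * Fm (2*n) w q = Fm (2*n) w (\<lambda>_. 0)" .
  have bE: "beta_phi (psi n) (vq n q) \<in> E_phi (psi n)" by (rule E_phi_gen) simp
  show ?thesis unfolding Pset_def mem_Collect_eq
    by (intro bexI[OF _ bE] bexI[OF _ q(3)]) (rule e[symmetric])
qed

lemma B_lemma: assumes n: "n \<ge> 1" and p0: "p 0 = 0"
  shows "transpose_mat (Fm (2*n) p (\<lambda>_. 0)) \<in> Pset n"
proof -
  obtain q where q: "q 0 = 0" "q 1 = 0" "Fm (2*n) p q \<in> ESp n" using F_full[where p=p, OF p0, of n] by blast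
  define S where "S = (\<Sum>k<2*n. p k * q k)"
  define p' where "p' = (\<lambda>c. p c + (if c = 1 then S else 0))"
  have z: "(\<Sum>k<2*n. (if k = 1 then S else 0) * q k) = 0" by (rule sum.neutral) (use q in auto)
  have "se n 1 2 S * Fm (2*n) p q = Fm (2*n) (\<lambda>c. (if c = 1 then S else 0) + p c + (if c = 1 then \<Sum>k<2*n. (if k = 1 then S else 0) * q k else 0)) (\<lambda>r. 0 + q r)"
    unfolding se_1_2 by (rule Fm_mult) (use q in simp_all)
  also have "\<dots> = Fm (2*n) p' q" unfolding z p'_def by (rule Fm_cong) auto
  finally have e1: "se n 1 2 S * Fm (2*n) p q = Fm (2*n) p' q" .
  have "se n 1 2 S \<in> ESp n" using n by (intro ESp_se) auto
  then have "Fm (2*n) p' q \<in> ESp n" unfolding e1[symmetric] using q(3) by (rule ESp_mult)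
  then have s: "transpose_mat (Fm (2*n) p' q) \<in> ESp n" by (rule ESp_transpose)
  have sum: "(\<Sum>k<2*n. p' k * - q k) = - S"
  proof -
    have "(\<Sum>k<2*n. p' k * - q k) = (\<Sum>k<2*n. - (p k * q k))"
      unfolding p'_def by (rule sum.cong) (use q in \<open>auto simp: algebra_simps\<close>)
    also have "\<dots> = - S" by (simp add: sum_negf S_def)
    finally show ?thesis .
  qed
  have "one_perp (alpha_phi (psi n) (vq n q)) * transpose_mat (Fm (2*n) p' q)
      = transpose_mat (Fm (2*n) (\<lambda>_. 0) (\<lambda>c. - q c)) * transpose_mat (Fm (2*n) p' q)"
    unfolding alpha_q[OF n q(1,2)] ..
  also have "\<dots> = transpose_mat (Fm (2*n) p' q * Fm (2*n) (\<lambda>_. 0) (\<lambda>c. - q c))"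
    by (rule transpose_mult[symmetric]) auto
  also have "Fm (2*n) p' q * Fm (2*n) (\<lambda>_. 0) (\<lambda>c. - q c) = Fm (2*n) (\<lambda>c. p' c + 0 + (if c = 1 then \<Sum>k<2*n. p' k * - q k else 0)) (\<lambda>r. q r + - q r)"
    by (rule Fm_mult) (use q p0 in \<open>simp_all add: p'_def\<close>)
  also have "\<dots> = Fm (2*n) p (\<lambda>_. 0)" unfolding sum by (rule Fm_cong) (auto simp: p'_def)
  finally have e: "one_perp (alpha_phi (psi n) (vq n q)) * transpose_mat (Fm (2*n) p' q) = transpose_mat (Fm (2*n) p (\<lambda>_. 0))" .
  have aE: "alpha_phi (psi n) (vq n q) \<in> E_phi (psi n)" by (rule E_phi_gen) simp
  show ?thesis unfolding Pset_def mem_Collect_eq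
    by (intro bexI[OF _ aE] bexI[OF _ s]) (rule e[symmetric])
qed


section \<open>conjugation\<close>

lemma CA: assumes M: "M \<in> carrier_mat N N" and M0: "\<And>r. r < N \<Longrightarrow> M $$ (r,0) = (if r = 0 then 1 else 0)"
  and w0: "w 0 = 0"
  shows "Fm N w (\<lambda>_. 0) * M = M * Fm N (\<lambda>c. \<Sum>k<N. w k * M $$ (k,c)) (\<lambda>_. 0)"
proof (rule mat_eqN[of _ N])
  show "Fm N w (\<lambda>_. 0) * M \<in> carrier_mat N N" by (rule mult_carrier_mat[OF Fm_carrier M])
  show "M * Fm N (\<lambda>c. \<Sum>k<N. w k * M $$ (k,c)) (\<lambda>_. 0) \<in> carrier_mat N N" by (rule mult_carrier_mat[OF M Fm_carrier])
  fix r c assume r: "r < N" and c: "c < N"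
  have "(Fm N w (\<lambda>_. 0) * M) $$ (r,c) = (\<Sum>k<N. Fm N w (\<lambda>_. 0) $$ (r,k) * M $$ (k,c))"
    by (rule mult_entry[OF Fm_carrier M r c])
  also have "\<dots> = (\<Sum>k<N. (if r = k then M $$ (k,c) else 0) + (if r = 0 then w k * M $$ (k,c) else 0))"
    by (rule sum.cong) (use r in \<open>auto simp: algebra_simps\<close>)
  also have "\<dots> = M $$ (r,c) + (if r = 0 then (\<Sum>k<N. w k * M $$ (k,c)) else 0)"
    using r by (simp add: sum.distrib)
  finally have L: "(Fm N w (\<lambda>_. 0) * M) $$ (r,c) = M $$ (r,c) + (if r = 0 then (\<Sum>k<N. w k * M $$ (k,c)) else 0)" .
  have "(M * Fm N (\<lambda>c. \<Sum>k<N. w k * M $$ (k,c)) (\<lambda>_. 0)) $$ (r,c) = (\<Sum>k<N. M $$ (r,k) * Fm N (\<lambda>c. \<Sum>k<N. w k * M $$ (k,c)) (\<lambda>_. 0) $$ (k,c))"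
    by (rule mult_entry[OF M Fm_carrier r c])
  also have "\<dots> = (\<Sum>k<N. (if k = c then M $$ (r,k) else 0) + (if k = 0 then M $$ (r,0) * (\<Sum>k<N. w k * M $$ (k,c)) else 0))"
    by (rule sum.cong) (use c in \<open>auto simp: algebra_simps\<close>)
  also have "\<dots> = M $$ (r,c) + M $$ (r,0) * (\<Sum>k<N. w k * M $$ (k,c))"
    using c by (simp add: sum.distrib)
  also have "\<dots> = M $$ (r,c) + (if r = 0 then (\<Sum>k<N. w k * M $$ (k,c)) else 0)"
    using M0[OF r] by simp
  finally show "(Fm N w (\<lambda>_. 0) * M) $$ (r,c) = (M * Fm N (\<lambda>c. \<Sum>k<N. w k * M $$ (k,c)) (\<lambda>_. 0)) $$ (r,c)"
    using L by simp
qed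

lemma CA0: fixes M :: "'a::comm_ring_1 mat" assumes "N > 0" and M0: "\<And>r. r < N \<Longrightarrow> M $$ (r,0) = (if r = 0 then 1 else 0)" and w0: "w 0 = 0"
  shows "(\<Sum>k<N. w k * M $$ (k,0)) = 0"
  by (rule sum.neutral) (use M0 w0 in auto)

lemma CB: assumes M: "M \<in> carrier_mat N N" and Mi: "Mi \<in> carrier_mat N N" and MMi: "M * Mi = 1\<^sub>m N"
  and M0: "\<And>c. c < N \<Longrightarrow> M $$ (0,c) = (if c = 0 then 1 else 0)"
  shows "transpose_mat (Fm N p (\<lambda>_. 0)) * M = M * transpose_mat (Fm N (\<lambda>k. \<Sum>j<N. Mi $$ (k,j) * p j) (\<lambda>_. 0))"
proof (rule mat_eqN[of _ N])
  show "transpose_mat (Fm N p (\<lambda>_. 0)) * M \<in> carrier_mat N N" by (rule mult_carrier_mat[OF _ M]) simp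
  show "M * transpose_mat (Fm N (\<lambda>k. \<Sum>j<N. Mi $$ (k,j) * p j) (\<lambda>_. 0)) \<in> carrier_mat N N" by (rule mult_carrier_mat[OF M]) simp
  fix r c assume r: "r < N" and c: "c < N"
  have tF: "transpose_mat (Fm N f (\<lambda>_. 0)) \<in> carrier_mat N N" for f by simp
  have "(transpose_mat (Fm N p (\<lambda>_. 0)) * M) $$ (r,c) = (\<Sum>k<N. transpose_mat (Fm N p (\<lambda>_. 0)) $$ (r,k) * M $$ (k,c))"
    by (rule mult_entry[OF tF M r c])
  also have "\<dots> = (\<Sum>k<N. (if k = r then M $$ (k,c) else 0) + (if k = 0 then p r * M $$ (0,c) else 0))"
    by (rule sum.cong) (use r in \<open>auto simp: algebra_simps\<close>)
  also have "\<dots> = M $$ (r,c) + p r * M $$ (0,c)"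
    using r by (simp add: sum.distrib)
  also have "\<dots> = M $$ (r,c) + (if c = 0 then p r else 0)" using M0[OF c] by simp
  finally have L: "(transpose_mat (Fm N p (\<lambda>_. 0)) * M) $$ (r,c) = M $$ (r,c) + (if c = 0 then p r else 0)" .
  have ds: "(\<Sum>k<N. M $$ (r,k) * (\<Sum>j<N. Mi $$ (k,j) * p j)) = p r"
  proof -
    have "(\<Sum>k<N. M $$ (r,k) * (\<Sum>j<N. Mi $$ (k,j) * p j)) = (\<Sum>k<N. \<Sum>j<N. M $$ (r,k) * Mi $$ (k,j) * p j)"
      by (simp add: sum_distrib_left mult.assoc)
    also have "\<dots> = (\<Sum>j<N. \<Sum>k<N. M $$ (r,k) * Mi $$ (k,j) * p j)" by (rule sum.swap)
    also have "\<dots> = (\<Sum>j<N. (M * Mi) $$ (r,j) * p j)"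
      by (rule sum.cong) (auto simp: mult_entry[OF M Mi r] sum_distrib_right)
    also have "\<dots> = (\<Sum>j<N. if j = r then p j else 0)"
      unfolding MMi by (rule sum.cong) (use r in auto)
    also have "\<dots> = p r" using r by simp
    finally show ?thesis .
  qed
  have "(M * transpose_mat (Fm N (\<lambda>k. \<Sum>j<N. Mi $$ (k,j) * p j) (\<lambda>_. 0))) $$ (r,c)
     = (\<Sum>k<N. M $$ (r,k) * transpose_mat (Fm N (\<lambda>k. \<Sum>j<N. Mi $$ (k,j) * p j) (\<lambda>_. 0)) $$ (k,c))"
    by (rule mult_entry[OF M tF r c])
  also have "\<dots> = (\<Sum>k<N. (if k = c then M $$ (r,k) else 0) + (if c = 0 then M $$ (r,k) * (\<Sum>j<N. Mi $$ (k,j) * p j) else 0))"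
    by (rule sum.cong) (use c in \<open>auto simp: algebra_simps\<close>)
  also have "\<dots> = M $$ (r,c) + (if c = 0 then (\<Sum>k<N. M $$ (r,k) * (\<Sum>j<N. Mi $$ (k,j) * p j)) else 0)"
    using c by (simp add: sum.distrib)
  also have "\<dots> = M $$ (r,c) + (if c = 0 then p r else 0)" unfolding ds ..
  finally show "(transpose_mat (Fm N p (\<lambda>_. 0)) * M) $$ (r,c) = (M * transpose_mat (Fm N (\<lambda>k. \<Sum>j<N. Mi $$ (k,j) * p j) (\<lambda>_. 0))) $$ (r,c)"
    using L by simp
qed

lemma CB0: fixes Mi :: "'a::comm_ring_1 mat" assumes Mi0: "\<And>c. c < N \<Longrightarrow> Mi $$ (0,c) = (if c = 0 then 1 else 0)" and p0: "p 0 = 0"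
  shows "(\<Sum>j<N. Mi $$ (0,j) * p j) = 0"
  by (rule sum.neutral) (use Mi0 p0 in auto)


section \<open>elementary matrices\<close>

lemma elem_carrier[simp]: "elem_mat m i j l \<in> carrier_mat m m"
  unfolding elem_mat_def unit_mat_def carrier_mat_def by simp

lemma elem_index: "r < m \<Longrightarrow> c < m \<Longrightarrow> elem_mat m i j l $$ (r,c) = (if r = c then 1 else 0) + (if r + 1 = i \<and> c + 1 = j then l else 0)"
  unfolding elem_mat_def unit_mat_def by simp

lemma elem_1j: "2 \<le> j \<Longrightarrow> elem_mat m 1 j l = Fm m (\<lambda>c. if c + 1 = j then l else 0) (\<lambda>_. 0)"
  by (rule mat_eqN[OF elem_carrier Fm_carrier]) (auto simp: elem_index)

lemma elem_i1: "2 \<le> i \<Longrightarrow> elem_mat m i 1 l = transpose_mat (Fm m (\<lambda>r. if r + 1 = i then l else 0) (\<lambda>_. 0))"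
  by (rule mat_eqN[OF elem_carrier]) (auto simp: elem_index)

definition Xm :: "nat \<Rightarrow> nat \<Rightarrow> nat \<Rightarrow> 'a::comm_ring_1 \<Rightarrow> 'a \<Rightarrow> 'a mat" where
  "Xm m i' j' a b = mat m m (\<lambda>(r,c). (if r = c then 1 else 0) + (if r = i' \<and> c = 0 then a else 0)
     + (if r = 0 \<and> c = j' then b else 0) + (if r = i' \<and> c = j' then a * b else 0))"

lemma Xm_carrier[simp]: "Xm m i' j' a b \<in> carrier_mat m m" by (simp add: Xm_def)

lemma comm1: assumes "i' \<noteq> 0" "j' \<noteq> 0"
  shows "elem_mat m (Suc i') 1 a * elem_mat m 1 (Suc j') b = Xm m i' j' a b"
proof (rule mat_eqN[of _ m])
  show "elem_mat m (Suc i') 1 a * elem_mat m 1 (Suc j') b \<in> carrier_mat m m" by (rule mult_carrier_mat[OF elem_carrier elem_carrier])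
  fix r c assume r: "r < m" and c: "c < m"
  have "(elem_mat m (Suc i') 1 a * elem_mat m 1 (Suc j') b) $$ (r,c) = (\<Sum>k<m. elem_mat m (Suc i') 1 a $$ (r,k) * elem_mat m 1 (Suc j') b $$ (k,c))"
    by (rule mult_entry[OF elem_carrier elem_carrier r c])
  also have "\<dots> = (\<Sum>k<m. ((if r = k then 1 else 0) + (if r = i' \<and> k = 0 then a else 0)) * ((if k = c then 1 else 0) + (if k = 0 \<and> c = j' then b else 0)))"
    by (rule sum.cong) (use r c in \<open>auto simp: elem_index\<close>)
  also have "\<dots> = Xm m i' j' a b $$ (r,c)"
    using r c assms by (simp add: Xm_def algebra_simps sum.distrib if_distrib[where f="\<lambda>x. x * _"] if_distrib[where f="\<lambda>x. _ * x"] sum.delta sum.delta' cong: if_cong)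
  finally show "(elem_mat m (Suc i') 1 a * elem_mat m 1 (Suc j') b) $$ (r,c) = Xm m i' j' a b $$ (r,c)" .
qed simp

lemma comm2: assumes "i' \<noteq> 0" "j' \<noteq> 0" "i' \<noteq> j'"
  shows "Xm m i' j' l 1 * Xm m i' j' (- l) (- 1) = elem_mat m (Suc i') (Suc j') l"
proof (rule mat_eqN[of _ m])
  show "Xm m i' j' l 1 * Xm m i' j' (- l) (- 1) \<in> carrier_mat m m" by (rule mult_carrier_mat[OF Xm_carrier Xm_carrier])
  fix r c assume r: "r < m" and c: "c < m"
  have "(Xm m i' j' l 1 * Xm m i' j' (- l) (- 1)) $$ (r,c) = (\<Sum>k<m. Xm m i' j' l 1 $$ (r,k) * Xm m i' j' (- l) (- 1) $$ (k,c))"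
    by (rule mult_entry[OF Xm_carrier Xm_carrier r c])
  also have "\<dots> = (\<Sum>k<m. ((if r = k then 1 else 0) + (if r = i' \<and> k = 0 then l else 0)
     + (if r = 0 \<and> k = j' then 1 else 0) + (if r = i' \<and> k = j' then l else 0)) *
      ((if k = c then 1 else 0) + (if k = i' \<and> c = 0 then - l else 0)
     + (if k = 0 \<and> c = j' then - 1 else 0) + (if k = i' \<and> c = j' then l else 0)))"
    by (rule sum.cong) (use r c in \<open>auto simp: Xm_def\<close>)
  also have "\<dots> = elem_mat m (Suc i') (Suc j') l $$ (r,c)"
    using r c assms by (simp add: elem_index algebra_simps sum.distrib if_distrib[where f="\<lambda>x. x * _"] if_distrib[where f="\<lambda>x. _ * x"] sum.delta sum.delta' cong: if_cong)
  finally show "(Xm m i' j' l 1 * Xm m i' j' (- l) (- 1)) $$ (r,c) = elem_mat m (Suc i') (Suc j') l $$ (r,c)" .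
qed simp


lemma N_Suc: "n \<ge> 1 \<Longrightarrow> Suc (2*n - 1) = 2*n" by simp

lemma one_perp_E_carrier: assumes n: "n \<ge> 1" and r: "\<rho> \<in> E_phi (psi n :: 'a::comm_ring_1 mat)"
  shows "one_perp \<rho> \<in> carrier_mat (2*n) (2*n)"
  using one_perp_carrier[of \<rho> "2*n-1"] E_phi_props[OF n r] N_Suc[OF n] by simp

lemma one_perp_col0: "A \<in> carrier_mat N N \<Longrightarrow> r < Suc N \<Longrightarrow> one_perp A $$ (r,0) = (if r = 0 then 1 else 0)"
  by (simp add: one_perp_index)
lemma one_perp_row0: "A \<in> carrier_mat N N \<Longrightarrow> c < Suc N \<Longrightarrow> one_perp A $$ (0,c) = (if c = 0 then 1 else 0)"
  by (simp add: one_perp_index)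

lemma Pset_carrier: assumes n: "n \<ge> 1" and X: "X \<in> Pset n"
  shows "X \<in> carrier_mat (2*n) (2*n)"
proof -
  from X obtain \<rho> s where r: "\<rho> \<in> E_phi (psi n)" and s: "s \<in> ESp n" and X: "X = one_perp \<rho> * s"
    unfolding Pset_def by auto
  show ?thesis unfolding X by (rule mult_carrier_mat[OF one_perp_E_carrier[OF n r] ESp_carrier[OF s]])
qed

lemma P1: assumes n: "n \<ge> 1" and r0: "\<rho>0 \<in> E_phi (psi n)" and X: "X \<in> Pset n"
  shows "one_perp \<rho>0 * X \<in> Pset n"
proof -
  from X obtain \<rho> s where r: "\<rho> \<in> E_phi (psi n)" and s: "s \<in> ESp n" and X: "X = one_perp \<rho> * s"
    unfolding Pset_def by auto
  have c0: "\<rho>0 \<in> carrier_mat (2*n-1) (2*n-1)" and c: "\<rho> \<in> carrier_mat (2*n-1) (2*n-1)"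
    using E_phi_props[OF n r0] E_phi_props[OF n r] by auto
  have "one_perp \<rho>0 * X = (one_perp \<rho>0 * one_perp \<rho>) * s" unfolding X
    by (rule assoc_mult_mat[symmetric, OF one_perp_E_carrier[OF n r0] one_perp_E_carrier[OF n r] ESp_carrier[OF s]])
  also have "\<dots> = one_perp (\<rho>0 * \<rho>) * s" unfolding one_perp_mult[OF c0 c] ..
  finally show ?thesis unfolding Pset_def using E_phi_mult[OF r0 r] s by blast
qed

lemma P2: assumes n: "n \<ge> 1" and X: "X \<in> Pset n" and s': "s' \<in> ESp n"
  shows "X * s' \<in> Pset n"
proof -
  from X obtain \<rho> s where r: "\<rho> \<in> E_phi (psi n)" and s: "s \<in> ESp n" and X: "X = one_perp \<rho> * s"
    unfolding Pset_def by auto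
  have "X * s' = one_perp \<rho> * (s * s')" unfolding X
    by (rule assoc_mult_mat[OF one_perp_E_carrier[OF n r] ESp_carrier[OF s] ESp_carrier[OF s']])
  then show ?thesis unfolding Pset_def using ESp_mult[OF s s'] r by blast
qed

lemma step_1j: assumes n: "n \<ge> 1" and j: "2 \<le> j" and X: "X \<in> Pset n"
  shows "elem_mat (2*n) 1 j l * X \<in> Pset n"
proof -
  from X obtain \<rho> s where r: "\<rho> \<in> E_phi (psi n)" and s: "s \<in> ESp n" and X: "X = one_perp \<rho> * s"
    unfolding Pset_def by auto
  define M where "M = one_perp \<rho>"
  define w where "w = (\<lambda>c. if c + 1 = j then l else (0::'a))"
  have w0: "w 0 = 0" using j by (simp add: w_def)
  have M: "M \<in> carrier_mat (2*n) (2*n)" unfolding M_def by (rule one_perp_E_carrier[OF n r])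
  have cr: "\<rho> \<in> carrier_mat (2*n-1) (2*n-1)" using E_phi_props[OF n r] by auto
  have M0: "M $$ (r',0) = (if r' = 0 then 1 else 0)" if "r' < 2*n" for r'
    unfolding M_def using one_perp_col0[OF cr, of r'] that N_Suc[OF n] by simp
  define w' where "w' = (\<lambda>c. \<Sum>k<2*n. w k * M $$ (k,c))"
  have w'0: "w' 0 = 0" unfolding w'_def by (rule CA0) (use n M0 w0 in auto)
  have g: "elem_mat (2*n) 1 j l = Fm (2*n) w (\<lambda>_. 0)" unfolding w_def by (rule elem_1j[OF j])
  have e: "Fm (2*n) w (\<lambda>_. 0) * M = M * Fm (2*n) w' (\<lambda>_. 0)" unfolding w'_def by (rule CA[where w=w, OF M M0 w0])
  have "elem_mat (2*n) 1 j l * X = (Fm (2*n) w (\<lambda>_. 0) * M) * s" unfolding g X M_def[symmetric]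
    by (rule assoc_mult_mat[symmetric, OF Fm_carrier M ESp_carrier[OF s]])
  also have "\<dots> = M * (Fm (2*n) w' (\<lambda>_. 0) * s)" unfolding e
    by (rule assoc_mult_mat[OF M Fm_carrier ESp_carrier[OF s]])
  finally have eq: "elem_mat (2*n) 1 j l * X = M * (Fm (2*n) w' (\<lambda>_. 0) * s)" .
  have "Fm (2*n) w' (\<lambda>_. 0) * s \<in> Pset n" by (rule P2[OF n A_lemma[where w=w', OF n w'0] s])
  then show ?thesis unfolding eq M_def by (rule P1[OF n r])
qed

lemma step_i1: assumes n: "n \<ge> 1" and i: "2 \<le> i" and X: "X \<in> Pset n"
  shows "elem_mat (2*n) i 1 l * X \<in> Pset n"
proof -
  from X obtain \<rho> s where r: "\<rho> \<in> E_phi (psi n)" and s: "s \<in> ESp n" and X: "X = one_perp \<rho> * s"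
    unfolding Pset_def by auto
  obtain \<rho>' where r': "\<rho>' \<in> E_phi (psi n)" and cr': "\<rho>' \<in> carrier_mat (2*n-1) (2*n-1)"
    and rr': "\<rho> * \<rho>' = 1\<^sub>m (2*n-1)" using E_phi_props[OF n r] by auto
  have cr: "\<rho> \<in> carrier_mat (2*n-1) (2*n-1)" using E_phi_props[OF n r] by auto
  define M where "M = one_perp \<rho>"
  define Mi where "Mi = one_perp \<rho>'"
  define p where "p = (\<lambda>r. if r + 1 = i then l else (0::'a))"
  have p0: "p 0 = 0" using i by (simp add: p_def)
  have M: "M \<in> carrier_mat (2*n) (2*n)" unfolding M_def by (rule one_perp_E_carrier[OF n r])
  have Mi: "Mi \<in> carrier_mat (2*n) (2*n)" unfolding Mi_def by (rule one_perp_E_carrier[OF n r'])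
  have MMi: "M * Mi = 1\<^sub>m (2*n)" unfolding M_def Mi_def one_perp_mult[OF cr cr', symmetric] rr' one_perp_one N_Suc[OF n] ..
  have M0: "M $$ (0,c) = (if c = 0 then 1 else 0)" if "c < 2*n" for c
    unfolding M_def using one_perp_row0[OF cr, of c] that N_Suc[OF n] by simp
  have Mi0: "Mi $$ (0,c) = (if c = 0 then 1 else 0)" if "c < 2*n" for c
    unfolding Mi_def using one_perp_row0[OF cr', of c] that N_Suc[OF n] by simp
  define p' where "p' = (\<lambda>k. \<Sum>j<2*n. Mi $$ (k,j) * p j)"
  have p'0: "p' 0 = 0" unfolding p'_def by (rule CB0) (use Mi0 p0 in auto)
  have g: "elem_mat (2*n) i 1 l = transpose_mat (Fm (2*n) p (\<lambda>_. 0))" unfolding p_def by (rule elem_i1[OF i])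
  have e: "transpose_mat (Fm (2*n) p (\<lambda>_. 0)) * M = M * transpose_mat (Fm (2*n) p' (\<lambda>_. 0))"
    unfolding p'_def by (rule CB[where p=p, OF M Mi MMi M0])
  have tF: "transpose_mat (Fm (2*n) f (\<lambda>_. 0)) \<in> carrier_mat (2*n) (2*n)" for f by simp
  have "elem_mat (2*n) i 1 l * X = (transpose_mat (Fm (2*n) p (\<lambda>_. 0)) * M) * s" unfolding g X M_def[symmetric]
    by (rule assoc_mult_mat[symmetric, OF tF M ESp_carrier[OF s]])
  also have "\<dots> = M * (transpose_mat (Fm (2*n) p' (\<lambda>_. 0)) * s)" unfolding e
    by (rule assoc_mult_mat[OF M tF ESp_carrier[OF s]])
  finally have eq: "elem_mat (2*n) i 1 l * X = M * (transpose_mat (Fm (2*n) p' (\<lambda>_. 0)) * s)" .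
  have "transpose_mat (Fm (2*n) p' (\<lambda>_. 0)) * s \<in> Pset n" by (rule P2[OF n B_lemma[where p=p', OF n p'0] s])
  then show ?thesis unfolding eq M_def by (rule P1[OF n r])
qed

lemma step_ij: assumes n: "n \<ge> 1" and i: "2 \<le> i" and j: "2 \<le> j" and ij: "i \<noteq> j" and X: "X \<in> Pset n"
  shows "elem_mat (2*n) i j l * X \<in> Pset n"
proof -
  obtain i' j' where i': "i = Suc i'" "i' \<noteq> 0" and j': "j = Suc j'" "j' \<noteq> 0" and ij': "i' \<noteq> j'"
    using i j ij by (cases i; cases j) auto
  let ?m = "2*n"
  define A where "A = elem_mat ?m i 1 l"
  define B where "B = elem_mat ?m 1 j (1::'a)"
  define C where "C = elem_mat ?m i 1 (-l)"
  define D where "D = elem_mat ?m 1 j (-1::'a)"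
  have cA: "A \<in> carrier_mat ?m ?m" "B \<in> carrier_mat ?m ?m" "C \<in> carrier_mat ?m ?m" "D \<in> carrier_mat ?m ?m"
    unfolding A_def B_def C_def D_def by simp_all
  have cX: "X \<in> carrier_mat ?m ?m" by (rule Pset_carrier[OF n X])
  have g: "elem_mat ?m i j l = (A * B) * (C * D)"
    unfolding A_def B_def C_def D_def i' j' comm1[OF i'(2) j'(2)] comm2[OF i'(2) j'(2) ij'] ..
  have "elem_mat ?m i j l * X = (A * B) * ((C * D) * X)" unfolding g
    by (rule assoc_mult_mat[OF mult_carrier_mat[OF cA(1,2)] mult_carrier_mat[OF cA(3,4)] cX])
  also have "(C * D) * X = C * (D * X)" by (rule assoc_mult_mat[OF cA(3,4) cX])
  also have "(A * B) * (C * (D * X)) = A * (B * (C * (D * X)))"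
    by (rule assoc_mult_mat[OF cA(1,2) mult_carrier_mat[OF cA(3) mult_carrier_mat[OF cA(4) cX]]])
  finally have eq: "elem_mat ?m i j l * X = A * (B * (C * (D * X)))" .
  have "D * X \<in> Pset n" unfolding D_def by (rule step_1j[OF n j X])
  then have "C * (D * X) \<in> Pset n" unfolding C_def by (rule step_i1[OF n i])
  then have "B * (C * (D * X)) \<in> Pset n" unfolding B_def by (rule step_1j[OF n j])
  then have "A * (B * (C * (D * X))) \<in> Pset n" unfolding A_def by (rule step_i1[OF n i])
  then show ?thesis unfolding eq .
qed

lemma step_gen: assumes n: "n \<ge> 1" and i: "1 \<le> i" and j: "1 \<le> j" and ij: "i \<noteq> j" and X: "X \<in> Pset n"
  shows "elem_mat (2*n) i j l * X \<in> Pset n"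
proof (cases "i = 1")
  case True
  then show ?thesis using step_1j[OF n _ X, of j l] j ij by auto
next
  case False
  show ?thesis
  proof (cases "j = 1")
    case True
    then show ?thesis using step_i1[OF n _ X, of i l] i False by auto
  next
    case False
    then show ?thesis using step_ij[OF n _ _ ij X] i j \<open>i \<noteq> 1\<close> by auto
  qed
qed


lemma elem_inv: assumes "i \<noteq> j"
  shows "elem_mat m i j l * elem_mat m i j (- l) = 1\<^sub>m m"
proof (rule mat_eqN[of _ m])
  show "elem_mat m i j l * elem_mat m i j (- l) \<in> carrier_mat m m" by (rule mult_carrier_mat[OF elem_carrier elem_carrier])
  fix r c assume r: "r < m" and c: "c < m"
  have "(elem_mat m i j l * elem_mat m i j (- l)) $$ (r,c) = (\<Sum>k<m. elem_mat m i j l $$ (r,k) * elem_mat m i j (- l) $$ (k,c))"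
    by (rule mult_entry[OF elem_carrier elem_carrier r c])
  also have "\<dots> = (\<Sum>k<m. ((if r = k then 1 else 0) + (if r + 1 = i \<and> k + 1 = j then l else 0)) * ((if k = c then 1 else 0) + (if k + 1 = i \<and> c + 1 = j then - l else 0)))"
    by (rule sum.cong) (use r c in \<open>auto simp: elem_index\<close>)
  also have "\<dots> = (\<Sum>k<m. (if k = r then (if k = c then 1 else 0) + (if k + 1 = i \<and> c + 1 = j then - l else 0) else 0)
      + (if k = c then (if r + 1 = i \<and> c + 1 = j then l else 0) else 0))"
    by (rule sum.cong) (use assms in \<open>auto simp: algebra_simps\<close>)
  also have "\<dots> = 1\<^sub>m m $$ (r,c)"
    using r c by (auto simp: sum.distrib)
  finally show "(elem_mat m i j l * elem_mat m i j (- l)) $$ (r,c) = 1\<^sub>m m $$ (r,c)" .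
qed simp

definition Gel :: "nat \<Rightarrow> 'a::comm_ring_1 mat set" where
  "Gel m = {elem_mat m i j l | i j l. 1 \<le> i \<and> i \<le> m \<and> 1 \<le> j \<and> j \<le> m \<and> i \<noteq> j}"

lemma main_W: fixes A :: "'a::comm_ring_1 mat" assumes n: "n \<ge> 1"
  shows "A \<in> gen_subgroup (2*n) (Gel (2*n)) \<Longrightarrow> A \<in> carrier_mat (2*n) (2*n) \<and>
    (\<exists>B\<in>carrier_mat (2*n) (2*n). A * B = 1\<^sub>m (2*n) \<and> B * A = 1\<^sub>m (2*n) \<and>
       (\<forall>X\<in>Pset n. A * X \<in> Pset n) \<and> (\<forall>X\<in>Pset n. B * X \<in> Pset n))"
proof (induction rule: gen_subgroup.induct)
  case gen_one
  have "\<forall>X\<in>Pset n. 1\<^sub>m (2*n) * X \<in> (Pset n :: 'a mat set)"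
  proof
    fix X :: "'a mat" assume X: "X \<in> Pset n"
    then have "X \<in> carrier_mat (2*n) (2*n)" by (rule Pset_carrier[OF n])
    then show "1\<^sub>m (2*n) * X \<in> Pset n" using X by simp
  qed
  then show ?case by (intro conjI bexI[of _ "1\<^sub>m (2*n)"]) auto
next
  case (gen_gen g)
  then obtain i j l where g: "g = elem_mat (2*n) i j l" and ij: "1 \<le> i" "1 \<le> j" "i \<noteq> j"
    unfolding Gel_def by auto
  have "- (- l) = l" by simp
  then have inv2: "elem_mat (2*n) i j (- l) * elem_mat (2*n) i j l = 1\<^sub>m (2*n)"
    using elem_inv[OF ij(3), of "2*n" "- l"] by simp
  show ?case unfolding g
    using elem_inv[OF ij(3), of "2*n" l] inv2 step_gen[OF n ij] by (intro conjI bexI[of _ "elem_mat (2*n) i j (- l)"]) auto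
next
  case (gen_mult A B)
  then obtain A' B' where A': "A' \<in> carrier_mat (2*n) (2*n)" "A*A' = 1\<^sub>m (2*n)" "A'*A = 1\<^sub>m (2*n)"
      "\<forall>X\<in>Pset n. A * X \<in> Pset n" "\<forall>X\<in>Pset n. A' * X \<in> Pset n"
    and B': "B' \<in> carrier_mat (2*n) (2*n)" "B*B' = 1\<^sub>m (2*n)" "B'*B = 1\<^sub>m (2*n)"
      "\<forall>X\<in>Pset n. B * X \<in> Pset n" "\<forall>X\<in>Pset n. B' * X \<in> Pset n"
    and c: "A \<in> carrier_mat (2*n) (2*n)" "B \<in> carrier_mat (2*n) (2*n)" by blast
  let ?m = "2*n"
  have e1: "A * B * (B' * A') = A * (B * (B' * A'))" using c A' B' by (intro assoc_mult_mat) auto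
  have e2: "(B * B') * A' = B * (B' * A')" using c A' B' by (intro assoc_mult_mat) auto
  have 1: "A * B * (B' * A') = 1\<^sub>m ?m" unfolding e1 e2[symmetric] using c A' B' by (simp del: assoc_mult_mat)
  have e3: "B' * A' * (A * B) = B' * (A' * (A * B))" using c A' B' by (intro assoc_mult_mat) auto
  have e4: "(A' * A) * B = A' * (A * B)" using c A' B' by (intro assoc_mult_mat) auto
  have 2: "B' * A' * (A * B) = 1\<^sub>m ?m" unfolding e3 e4[symmetric] using c A' B' by (simp del: assoc_mult_mat)
  have 3: "\<forall>X\<in>Pset n. A * B * X \<in> Pset n"
  proof
    fix X :: "'a mat" assume X: "X \<in> Pset n"
    have "A * B * X = A * (B * X)" using c Pset_carrier[OF n X] by (intro assoc_mult_mat) auto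
    then show "A * B * X \<in> Pset n" using X A'(4) B'(4) by auto
  qed
  have 4: "\<forall>X\<in>Pset n. B' * A' * X \<in> Pset n"
  proof
    fix X :: "'a mat" assume X: "X \<in> Pset n"
    have "B' * A' * X = B' * (A' * X)" using A' B' Pset_carrier[OF n X] by (intro assoc_mult_mat) auto
    then show "B' * A' * X \<in> Pset n" using X A'(5) B'(5) by auto
  qed
  show ?case using 1 2 3 4 c A' B' by (intro conjI bexI[of _ "B' * A'"] mult_carrier_mat) auto
next
  case (gen_inv A B)
  then obtain A' where A': "A' \<in> carrier_mat (2*n) (2*n)" "A*A' = 1\<^sub>m (2*n)" "A'*A = 1\<^sub>m (2*n)"
      "\<forall>X\<in>Pset n. A * X \<in> Pset n" "\<forall>X\<in>Pset n. A' * X \<in> Pset n"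
    and c: "A \<in> carrier_mat (2*n) (2*n)" by blast
  have "B = B * (A * A')" using gen_inv(2) A' by simp
  also have "\<dots> = (B * A) * A'" using gen_inv(2) c A' by (intro assoc_mult_mat[symmetric]) auto
  also have "\<dots> = A'" using gen_inv(4) A' by simp
  finally have BA': "B = A'" .
  show ?case unfolding BA' using A' c by (intro conjI bexI[of _ A]) auto
qed

theorem lemma4p3:
  fixes n :: nat and \<epsilon> :: "'a::comm_ring_1 mat"
  assumes "n \<ge> 2" and "\<epsilon> \<in> E_grp (2*n)"
  shows "\<exists>\<rho> \<in> E_phi (psi n :: 'a mat). one_perp \<rho> * \<epsilon> \<in> ESp n"
proof -
  have n: "n \<ge> 1" using assms(1) by simp
  have eg: "\<epsilon> \<in> gen_subgroup (2*n) (Gel (2*n))" using assms(2) unfolding E_grp_def Gel_def .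
  from main_W[OF n eg] have c: "\<epsilon> \<in> carrier_mat (2*n) (2*n)" and cl: "\<forall>X\<in>Pset n. \<epsilon> * X \<in> Pset n" by auto
  have e1: "one_perp (1\<^sub>m (2*n-1)) * 1\<^sub>m (2*n) = (1\<^sub>m (2*n) :: 'a mat)" unfolding one_perp_one N_Suc[OF n] by simp
  have "(1\<^sub>m (2*n) :: 'a mat) \<in> Pset n" unfolding Pset_def mem_Collect_eq
    by (intro bexI[OF _ E_phi_one] bexI[OF _ ESp_one]) (rule e1[symmetric])
  then have "\<epsilon> * 1\<^sub>m (2*n) \<in> Pset n" using cl by blast
  then have "\<epsilon> \<in> Pset (n) " using c by simp
  then obtain \<rho> s where r: "\<rho> \<in> E_phi (psi n :: 'a mat)" and s: "s \<in> ESp n" and e: "\<epsilon> = one_perp \<rho> * s"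
    unfolding Pset_def by auto
  obtain \<rho>' where r': "\<rho>' \<in> E_phi (psi n :: 'a mat)" and cr': "\<rho>' \<in> carrier_mat (2*n-1) (2*n-1)"
    and rr': "\<rho>' * \<rho> = 1\<^sub>m (2*n-1)" using E_phi_props[OF n r] by auto
  have cr: "\<rho> \<in> carrier_mat (2*n-1) (2*n-1)" using E_phi_props[OF n r] by auto
  have "one_perp \<rho>' * \<epsilon> = (one_perp \<rho>' * one_perp \<rho>) * s" unfolding e
    by (rule assoc_mult_mat[symmetric, OF one_perp_E_carrier[OF n r'] one_perp_E_carrier[OF n r] ESp_carrier[OF s]])
  also have "\<dots> = s" unfolding one_perp_mult[OF cr' cr, symmetric] rr' one_perp_one N_Suc[OF n]
    using ESp_carrier[OF s] by simp
  finally show ?thesis using r' s by auto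
qed

end
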